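(* Let $I\ge 2$, $M>3$, $R\ge 1$ be integers and let $\mathcal{M}_1,\mathcal{M}_2,\mathcal{M}_3$ be pairwise disjoint nonempty subsets of $\{1,\dots,M\}$ with $\mathcal{M}_1\cup\mathcal{M}_2\cup\mathcal{M}_3=\{1,\dots,M\}$, of cardinalities $M_1,M_2,M_3$. Let $\mathcal{T}=\mathcal{M}_1\times\mathcal{M}_2\times\mathcal{M}_3$ be the Cartesian coupling, i.e. $\mathcal{T}=\{\{j,k,\ell\}: j\in\mathcal{M}_1,k\in\mathcal{M}_2,\ell\in\mathcal{M}_3\}$. Suppose that the real rank-$R$ CP model for tensors of size $((I-1)M_1+1)\times((I-1)M_2+1)\times((I-1)M_3+1)$ is identifiable (generically unique). Then the rank-$R$ PCTF3D model $(\mu,\Theta)$ for the coupling $\mathcal{T}$ is identifiable.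
   Context: Real rank-$R$ CP model for $I_1\times I_2\times I_3$ tensors: the map $(\boldsymbol\lambda,\mathbf{A},\mathbf{B},\mathbf{C})\mapsto\sum_{r=1}^R\lambda_r\mathbf{a}_r\circ\mathbf{b}_r\circ\mathbf{c}_r$ with $\mathbf{A}\in\mathbb{R}^{I_1\times R}$ etc.; it is identifiable (generically unique) if, for all parameters outside a Lebesgue-null set, every other $R$-term decomposition of the same tensor is obtained by permuting the rank-one terms and rescaling factors within a term. PCTF3D model: a coupling $\mathcal{T}$ is a set of $T$ three-element subsets (triplets) of $\{1,\dots,M\}$. Parameters $\theta=(\theta_1,\dots,\theta_R)$ with $\theta_r=(\lambda_r,\mathbf{a}^{(1)}_r,\dots,\mathbf{a}^{(M)}_r)\in\mathbb{R}\times(\mathbb{R}^I)^M$. The map $\mu:\mathbb{R}^{R(IM+1)}\to\mathbb{R}^{TI^3}$ sends $\theta$ to the tuple, over triplets $\{j,k,\ell\}\in\mathcal{T}$ (with $j<k<\ell$, in a fixed order), of the vectorized tensors $\mathcal{H}^{(jk\ell)}=\sum_{r=1}^R\lambda_r\,\mathbf{a}^{(j)}_r\circ\mathbf{a}^{(k)}_r\circ\mathbf{a}^{(\ell)}_r\in\mathbb{R}^{I\times I\times I}$ (these are the 3D marginals of $\mathcal{H}=\sum_r\lambda_r\mathbf{a}^{(1)}_r\circ\cdots\circ\mathbf{a}^{(M)}_r$). The constraint set is $\Theta=\{\theta:\lambda_r\ge0,\ \sum_r\lambda_r=1,\ \mathbf{a}^{(m)}_r\ge0,\ \mathbf{1}_I^T\mathbf{a}^{(m)}_r=1\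 \forall r,m\}$. The model $(\mu,\Theta)$ is identifiable if for generic $\theta\in\Theta$ (all except a subset of $\Theta$ of measure zero with respect to Lebesgue measure on the affine hull of $\Theta$), every $\theta'\in\Theta$ with $\mu(\theta')=\mu(\theta)$ is obtained from $\theta$ by a permutation of the blocks $\theta_1,\dots,\theta_R$. *)

theory Defs
  imports "HOL-Analysis.Analysis"
begin

text \<open>A CP parameter (lambda, A, B, C) is encoded as a single real vector indexed by
  triples: (0,r,0) is lambda_r, (1,i,r) is A(i,r), (2,i,r) is B(i,r), (3,i,r) is C(i,r)
  (all indices 0-based).\<close>

definition cp_idx :: "nat \<Rightarrow> nat \<Rightarrow> nat \<Rightarrow> nat \<Rightarrow> (nat \<times> nat \<times> nat) set" where
  "cp_idx I1 I2 I3 R =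
     {(0, r, 0) | r. r < R} \<union> {(1, i, r) | i r. i < I1 \<and> r < R}
     \<union> {(2, i, r) | i r. i < I2 \<and> r < R} \<union> {(3, i, r) | i r. i < I3 \<and> r < R}"

definition cp_measure :: "nat \<Rightarrow> nat \<Rightarrow> nat \<Rightarrow> nat \<Rightarrow> (nat \<times> nat \<times> nat \<Rightarrow> real) measure" where
  "cp_measure I1 I2 I3 R = PiM (cp_idx I1 I2 I3 R) (\<lambda>_. lborel)"

definition cp_tensor :: "nat \<Rightarrow> (nat \<times> nat \<times> nat \<Rightarrow> real) \<Rightarrow> nat \<Rightarrow> nat \<Rightarrow> nat \<Rightarrow> real" where
  "cp_tensor R p i1 i2 i3 = (\<Sum>r<R. p (0, r, 0) * p (1, i1, r) * p (2, i2, r) * p (3, i3, r))"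

definition cp_equivalent ::
  "nat \<Rightarrow> nat \<Rightarrow> nat \<Rightarrow> nat \<Rightarrow> (nat \<times> nat \<times> nat \<Rightarrow> real) \<Rightarrow> (nat \<times> nat \<times> nat \<Rightarrow> real) \<Rightarrow> bool" where
  "cp_equivalent I1 I2 I3 R p p' \<longleftrightarrow>
     (\<exists>\<sigma> \<alpha> \<beta> \<gamma> \<delta>. bij_betw \<sigma> {..<R} {..<R} \<and>
        (\<forall>r<R. \<delta> r * \<alpha> r * \<beta> r * \<gamma> r = (1::real) \<and>
               p' (0, r, 0) = \<delta> r * p (0, \<sigma> r, 0) \<and>
               (\<forall>i<I1. p' (1, i, r) = \<alpha> r * p (1, i, \<sigma> r)) \<and>
               (\<forall>i<I2. p' (2, i, r) = \<beta> r * p (2, i, \<sigma> r)) \<and>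
               (\<forall>i<I3. p' (3, i, r) = \<gamma> r * p (3, i, \<sigma> r))))"

definition cp_identifiable :: "nat \<Rightarrow> nat \<Rightarrow> nat \<Rightarrow> nat \<Rightarrow> bool" where
  "cp_identifiable I1 I2 I3 R \<longleftrightarrow>
     (\<exists>N \<in> null_sets (cp_measure I1 I2 I3 R).
        \<forall>p \<in> space (cp_measure I1 I2 I3 R) - N.
          \<forall>p' \<in> space (cp_measure I1 I2 I3 R).
            (\<forall>i1<I1. \<forall>i2<I2. \<forall>i3<I3. cp_tensor R p' i1 i2 i3 = cp_tensor R p i1 i2 i3)
            \<longrightarrow> cp_equivalent I1 I2 I3 R p p')"

text \<open>theta = (lam, a): lam r is lambda_r (r < R), a m r i is the i-th entry of
  a^(m)_r (m in {1..M}, r < R, i < I; indices r and i are 0-based).\<close>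

definition pctf_Theta :: "nat \<Rightarrow> nat \<Rightarrow> nat \<Rightarrow> (nat \<Rightarrow> real) \<Rightarrow> (nat \<Rightarrow> nat \<Rightarrow> nat \<Rightarrow> real) \<Rightarrow> bool" where
  "pctf_Theta I M R lam a \<longleftrightarrow>
     (\<forall>r<R. lam r \<ge> 0) \<and> (\<Sum>r<R. lam r) = 1 \<and>
     (\<forall>m\<in>{1..M}. \<forall>r<R. (\<forall>i<I. a m r i \<ge> 0) \<and> (\<Sum>i<I. a m r i) = 1)"

definition pctf_mu :: "nat \<Rightarrow> nat \<Rightarrow> nat set set \<Rightarrow> (nat \<Rightarrow> real) \<Rightarrow> (nat \<Rightarrow> nat \<Rightarrow> nat \<Rightarrow> real)
    \<Rightarrow> nat \<times> nat \<times> nat \<times> nat \<times> nat \<times> nat \<Rightarrow> real" where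
  "pctf_mu I R T lam a = (\<lambda>(j, k, l, i1, i2, i3).
     if j < k \<and> k < l \<and> {j, k, l} \<in> T \<and> i1 < I \<and> i2 < I \<and> i3 < I
     then (\<Sum>r<R. lam r * a j r i1 * a k r i2 * a l r i3) else 0)"

definition pctf_block_perm :: "nat \<Rightarrow> nat \<Rightarrow> nat \<Rightarrow> (nat \<Rightarrow> real) \<Rightarrow> (nat \<Rightarrow> nat \<Rightarrow> nat \<Rightarrow> real)
    \<Rightarrow> (nat \<Rightarrow> real) \<Rightarrow> (nat \<Rightarrow> nat \<Rightarrow> nat \<Rightarrow> real) \<Rightarrow> bool" where
  "pctf_block_perm I M R lam a lam' a' \<longleftrightarrow>
     (\<exists>\<sigma>. bij_betw \<sigma> {..<R} {..<R} \<and>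
        (\<forall>r<R. lam' r = lam (\<sigma> r) \<and> (\<forall>m\<in>{1..M}. \<forall>i<I. a' m r i = a m (\<sigma> r) i)))"

text \<open>Coordinates of the affine hull of Theta: the affine hull is
  {sum lam = 1} x prod {1^T a = 1}; it is parametrized affinely-isomorphically by dropping
  lam_(R-1) and the last entry a^(m)_r(I-1) of every factor. Null sets of Lebesgue measure
  on the affine hull are exactly the preimages of Lebesgue-null sets of these coordinates.\<close>
definition pctf_idx :: "nat \<Rightarrow> nat \<Rightarrow> nat \<Rightarrow> (nat \<times> nat \<times> nat \<times> nat) set" where
  "pctf_idx I M R = {(0, 0, r, 0) | r. r + 1 < R} \<union>
     {(1, m, r, i) | m r i. m \<in> {1..M} \<and> r < R \<and> i + 1 < I}"

definition pctf_coords :: "nat \<Rightarrow> nat \<Rightarrow> nat \<Rightarrow> (nat \<Rightarrow> real) \<Rightarrow> (nat \<Rightarrow> nat \<Rightarrow> nat \<Rightarrow> real)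
    \<Rightarrow> (nat \<times> nat \<times> nat \<times> nat \<Rightarrow> real)" where
  "pctf_coords I M R lam a =
     restrict (\<lambda>(c, m, r, i). if c = 0 then lam r else a m r i) (pctf_idx I M R)"

definition pctf_identifiable :: "nat \<Rightarrow> nat \<Rightarrow> nat \<Rightarrow> nat set set \<Rightarrow> bool" where
  "pctf_identifiable I M R T \<longleftrightarrow>
     (\<exists>N \<in> null_sets (PiM (pctf_idx I M R) (\<lambda>_. lborel)).
        \<forall>lam a. pctf_Theta I M R lam a \<and> pctf_coords I M R lam a \<notin> N \<longrightarrow>
          (\<forall>lam' a'. pctf_Theta I M R lam' a' \<and> pctf_mu I R T lam' a' = pctf_mu I R T lam a
             \<longrightarrow> pctf_block_perm I M R lam a lam' a'))"

end

theory Submission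
  imports Defs
begin

abbreviation LB :: "'i set \<Rightarrow> ('i \<Rightarrow> real) measure" where
  "LB V \<equiv> PiM V (\<lambda>_. lborel)"

interpretation lbps: product_sigma_finite "\<lambda>_::'i. (lborel::real measure)"
  by standard

lemma null_section_AE:
  fixes U V :: "'i set"
  assumes fin: "finite U" "finite V" and disj: "U \<inter> V = {}"
    and N: "N \<in> null_sets (LB (U \<union> V))"
  shows "AE u in LB U. {v \<in> space (LB V). merge U V (u, v) \<in> N} \<in> null_sets (LB V)"
proof -
  have Ns: "N \<in> sets (LB (U \<union> V))" using N by auto
  have "emeasure (LB (U \<union> V)) N = 0" using N by auto
  then have "(\<integral>\<^sup>+x. emeasure (LB V) ((\<lambda>y. merge U V (x, y)) -` N \<inter> space (LB V)) \<partial>LB U) = 0"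
    using lbps.emeasure_fold_integral[OF disj fin Ns] by simp
  then have "AE x in LB U. emeasure (LB V) ((\<lambda>y. merge U V (x, y)) -` N \<inter> space (LB V)) = 0"
    by (subst (asm) nn_integral_0_iff_AE) (use lbps.emeasure_fold_measurable[OF disj fin Ns] in auto)
  then show ?thesis
  proof (rule AE_mp, intro AE_I2 impI)
    fix x assume x: "x \<in> space (LB U)"
      and e: "emeasure (LB V) ((\<lambda>y. merge U V (x, y)) -` N \<inter> space (LB V)) = 0"
    have eq: "{v \<in> space (LB V). merge U V (x, v) \<in> N} = (\<lambda>y. merge U V (x, y)) -` N \<inter> space (LB V)"
      by auto
    have "(\<lambda>y. merge U V (x, y)) \<in> measurable (LB V) (LB (U \<union> V))"
      using x by (intro measurable_Pair2[OF measurable_merge]) auto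
    then have "(\<lambda>y. merge U V (x, y)) -` N \<inter> space (LB V) \<in> sets (LB V)"
      using Ns by (rule measurable_sets)
    then show "{v \<in> space (LB V). merge U V (x, v) \<in> N} \<in> null_sets (LB V)"
      using e eq by (simp add: null_sets_def)
  qed
qed

lemma AE_coord_nonzero:
  fixes U :: "'i set"
  assumes "finite U" "j \<in> U"
  shows "AE u in LB U. u j \<noteq> 0"
proof (rule AE_I')
  let ?A = "\<lambda>i. if i = j then {0::real} else UNIV"
  show "{u \<in> space (LB U). \<not> u j \<noteq> 0} \<subseteq> PiE U ?A"
    using assms by (auto simp: space_PiM PiE_iff extensional_def)
  have "emeasure (LB U) (PiE U ?A) = (\<Prod>i\<in>U. emeasure lborel (?A i))"
    using assms by (intro lbps.emeasure_PiM) auto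
  also have "\<dots> = 0"
    using assms by (intro prod_zero[of U]) (auto intro!: bexI[of _ j])
  finally show "PiE U ?A \<in> null_sets (LB U)"
    using assms by (auto intro!: sets_PiM_I_finite)
qed

lemma AE_all_coords_nonzero:
  fixes U :: "'i set"
  assumes "finite U"
  shows "AE u in LB U. \<forall>j\<in>U. u j \<noteq> 0"
  using assms by (subst AE_finite_all) (auto intro: AE_coord_nonzero)

lemma AE_LB_ex:
  fixes U :: "'i set"
  assumes "finite U" "AE u in LB U. P u"
  shows "\<exists>u\<in>space (LB U). P u"
proof (rule ccontr)
  assume "\<not> ?thesis"
  then have "AE u in LB U. False" using assms(2) by (auto elim: AE_mp)
  then have "emeasure (LB U) (space (LB U)) = 0" using ae_filter_eq_bot_iff[of "LB U"] trivial_limit_def by auto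
  moreover have "emeasure (LB U) (space (LB U)) = (\<Prod>i\<in>U. emeasure lborel (UNIV::real set))"
    using assms by (subst space_PiM, subst lbps.emeasure_PiM) (auto simp: space_PiM)
  ultimately show False by (simp add: prod_zero_iff assms)
qed

lemma measurable_upd_pair:
  fixes V0 :: "'i set"
  assumes "l \<notin> V0"
  shows "(\<lambda>p. (fst p)(l := snd p)) \<in> measurable (LB V0 \<Otimes>\<^sub>M lborel) (LB (insert l V0))"
proof -
  have "(\<lambda>\<omega> i. (\<lambda>i p. if i = l then snd p else fst p i) i \<omega>) \<in> measurable (LB V0 \<Otimes>\<^sub>M lborel) (LB (insert l V0))"
  proof (rule measurable_PiM_single')
    fix i assume "i \<in> insert l V0"
    then show "(\<lambda>p. if i = l then snd p else fst p i) \<in> measurable (LB V0 \<Otimes>\<^sub>M lborel) lborel"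
      unfolding measurable_lborel2 by (cases "i = l") auto
  next
    show "(\<lambda>\<omega> i. if i = l then snd \<omega> else fst \<omega> i) \<in> space (LB V0 \<Otimes>\<^sub>M lborel) \<rightarrow> (\<Pi>\<^sub>E i\<in>insert l V0. space lborel)"
      using assms by (auto simp: space_pair_measure space_PiM PiE_iff extensional_def split: if_splits)
  qed
  moreover have "\<And>p. (\<lambda>i. if i = l then snd p else fst p i) = (fst p)(l := snd p)"
    by auto
  ultimately show ?thesis by simp
qed

lemma null_fiber_affine:
  fixes V :: "'i set"
  assumes fin: "finite V" and l: "l \<in> V" and a: "a \<noteq> 0"
    and h[measurable]: "h \<in> borel_measurable (LB V)"
    and hl: "\<And>x y. h (x(l := y)) = h x"
    and N: "N \<in> null_sets (LB V)"
  shows "{x \<in> space (LB V). x(l := a * x l + h x) \<in> N} \<in> null_sets (LB V)"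
proof -
  define V0 where "V0 = V - {l}"
  have V: "V = insert l V0" and l0: "l \<notin> V0" and fin0: "finite V0"
    using l fin by (auto simp: V0_def)
  let ?F = "\<lambda>x. x(l := a * x l + h x)"
  have Fm: "?F \<in> measurable (LB V) (LB V)"
  proof -
    have "(\<lambda>\<omega> i. (\<lambda>i \<omega>. if i = l then a * \<omega> l + h \<omega> else \<omega> i) i \<omega>) \<in> measurable (LB V) (LB V)"
    proof (rule measurable_PiM_single')
      fix i assume "i \<in> V"
      then show "(\<lambda>\<omega>. if i = l then a * \<omega> l + h \<omega> else \<omega> i) \<in> measurable (LB V) lborel"
        unfolding measurable_lborel2 using l by (cases "i = l") simp_all
    next
      show "(\<lambda>\<omega> i. if i = l then a * \<omega> l + h \<omega> else \<omega> i) \<in> space (LB V) \<rightarrow> (\<Pi>\<^sub>E i\<in>V. space lborel)"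
        using l by (auto simp: space_PiM PiE_iff extensional_def)
    qed
    moreover have "\<And>x. (\<lambda>i. if i = l then a * x l + h x else x i) = ?F x"
      by auto
    ultimately show ?thesis by simp
  qed
  have Ns: "N \<in> sets (LB V)" using N by auto
  have Bs: "{x \<in> space (LB V). ?F x \<in> N} \<in> sets (LB V)"
    using measurable_sets[OF Fm Ns] by (simp add: vimage_def Int_def conj_commute)
  let ?B = "{x \<in> space (LB V). ?F x \<in> N}"
  have "emeasure (LB V) ?B = (\<integral>\<^sup>+x. indicator ?B x \<partial>LB V)"
    using Bs by simp
  also have "\<dots> = (\<integral>\<^sup>+ x. (\<integral>\<^sup>+ y. indicator ?B (x(l := y)) \<partial>lborel) \<partial>LB V0)"
    unfolding V using fin0 l0 Bs V by (intro lbps.product_nn_integral_insert) auto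
  also have "\<dots> = (\<integral>\<^sup>+ x. ennreal (1 / \<bar>a\<bar>) * (\<integral>\<^sup>+ y. indicator N (x(l := y)) \<partial>lborel) \<partial>LB V0)"
  proof (rule nn_integral_cong)
    fix x assume x: "x \<in> space (LB V0)"
    have xs: "x(l := y) \<in> space (LB V)" for y
      using x l0 by (auto simp: V space_PiM PiE_iff extensional_def)
    have eqy: "indicator ?B (x(l := y)) = indicator N (x(l := h x + a * y))" for y
      using xs[of y] by (auto simp: indicator_def hl add.commute)
    then have "(\<integral>\<^sup>+ y. indicator ?B (x(l := y)) \<partial>lborel) = (\<integral>\<^sup>+ y. indicator N (x(l := h x + a * y)) \<partial>lborel)"
      by (simp only: eqy)
    moreover have fm: "(\<lambda>y. indicator N (x(l := y)) :: ennreal) \<in> borel_measurable borel"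
    proof -
      have "(\<lambda>y. x(l := y)) \<in> measurable lborel (LB V)"
        using measurable_component_update[OF x l0] by (simp add: V)
      then have "(\<lambda>y. indicator N (x(l := y)) :: ennreal) \<in> borel_measurable lborel"
        using Ns by measurable
      then show ?thesis by simp
    qed
    have "(\<integral>\<^sup>+ y. indicator N (x(l := y)) \<partial>lborel) = ennreal \<bar>a\<bar> * (\<integral>\<^sup>+ y. indicator N (x(l := h x + a * y)) \<partial>lborel)"
      using nn_integral_real_affine[OF fm a, of "h x"] by simp
    then have "ennreal (1 / \<bar>a\<bar>) * (\<integral>\<^sup>+ y. indicator N (x(l := y)) \<partial>lborel) = (\<integral>\<^sup>+ y. indicator N (x(l := h x + a * y)) \<partial>lborel)"
      using a by (simp add: mult.assoc[symmetric] ennreal_mult[symmetric])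
    ultimately show "(\<integral>\<^sup>+ y. indicator ?B (x(l := y)) \<partial>lborel) = ennreal (1 / \<bar>a\<bar>) * (\<integral>\<^sup>+ y. indicator N (x(l := y)) \<partial>lborel)"
      by simp
  qed
  also have "\<dots> = ennreal (1 / \<bar>a\<bar>) * (\<integral>\<^sup>+ x. (\<integral>\<^sup>+ y. indicator N (x(l := y)) \<partial>lborel) \<partial>LB V0)"
  proof (rule nn_integral_cmult)
    have "(\<lambda>x. \<integral>\<^sup>+ y. indicator N (x(l := y)) \<partial>lborel) \<in> borel_measurable (LB V0)"
    proof (rule lborel.borel_measurable_nn_integral)
      have "(\<lambda>p. indicator N ((fst p)(l := snd p)) :: ennreal) \<in> borel_measurable (LB V0 \<Otimes>\<^sub>M lborel)"
        using measurable_upd_pair[OF l0] Ns unfolding V[symmetric] by measurable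
      then show "(\<lambda>(x, y). indicator N (x(l := y)) :: ennreal) \<in> borel_measurable (LB V0 \<Otimes>\<^sub>M lborel)"
        by (simp add: case_prod_beta)
    qed
    then show "(\<lambda>x. \<integral>\<^sup>+ y. indicator N (x(l := y)) \<partial>lborel) \<in> borel_measurable (LB V0)" .
  qed
  also have "(\<integral>\<^sup>+ x. (\<integral>\<^sup>+ y. indicator N (x(l := y)) \<partial>lborel) \<partial>LB V0) = (\<integral>\<^sup>+x. indicator N x \<partial>LB V)"
    unfolding V using fin0 l0 Ns V by (intro lbps.product_nn_integral_insert[symmetric]) auto
  also have "\<dots> = 0" using Ns N by (subst nn_integral_indicator) auto
  finally have "emeasure (LB V) ?B = 0" by (simp only: mult_zero_right)
  then show ?thesis using Bs by (simp only: null_sets_def mem_Collect_eq)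
qed

lemma null_scale:
  fixes V :: "'i set"
  assumes fin: "finite V" and s: "\<forall>v\<in>V. s v \<noteq> 0" and Y: "Y \<in> null_sets (LB V)"
  shows "{y \<in> space (LB V). (\<lambda>v\<in>V. s v * y v) \<in> Y} \<in> null_sets (LB V)"
proof -
  have "finite W \<Longrightarrow> W \<subseteq> V \<Longrightarrow> {y \<in> space (LB V). (\<lambda>v\<in>V. if v \<in> W then s v * y v else y v) \<in> Y} \<in> null_sets (LB V)" for W
  proof (induction W rule: finite_induct)
    case empty
    have eq0: "{y \<in> space (LB V). (\<lambda>v\<in>V. if v \<in> {} then s v * y v else y v) \<in> Y} = Y"
    proof -
      have "y \<in> space (LB V) \<Longrightarrow> (\<lambda>v\<in>V. y v) = y" for y
        by (auto simp: space_PiM PiE_iff extensional_def)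
      then show ?thesis using Y[THEN null_sets.sets_into_space] by auto
    qed
    show ?case by (simp only: eq0 Y)
  next
    case (insert w W)
    let ?Z = "{y \<in> space (LB V). (\<lambda>v\<in>V. if v \<in> W then s v * y v else y v) \<in> Y}"
    have Z: "?Z \<in> null_sets (LB V)" by (rule insert.IH) (use insert.prems in auto)
    have wV: "w \<in> V" using insert by auto
    have "{y \<in> space (LB V). y(w := s w * y w + 0) \<in> ?Z} \<in> null_sets (LB V)"
      by (rule null_fiber_affine[OF fin wV]) (use s wV Z in auto)
    moreover have "{y \<in> space (LB V). y(w := s w * y w + 0) \<in> ?Z} =
        {y \<in> space (LB V). (\<lambda>v\<in>V. if v \<in> insert w W then s v * y v else y v) \<in> Y}"
    proof -
      have sp: "y \<in> space (LB V) \<Longrightarrow> y(w := c) \<in> space (LB V)" for y c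
        using wV by (auto simp: space_PiM PiE_iff extensional_def)
      have "y \<in> space (LB V) \<Longrightarrow> (\<lambda>v\<in>V. if v \<in> W then s v * (y(w := s w * y w)) v else (y(w := s w * y w)) v)
          = (\<lambda>v\<in>V. if v \<in> insert w W then s v * y v else y v)" for y
        using insert by (auto intro!: ext)
      then show ?thesis using sp by auto
    qed
    ultimately show ?case by metis
  qed
  from this[OF fin order_refl] show ?thesis
    by (simp cong: restrict_cong)
qed

lemma reindex_distr:
  fixes V :: "'i set" and J :: "'j set"
  assumes fin: "finite V" and bij: "bij_betw \<rho> V J"
  shows "distr (LB J) (LB V) (\<lambda>c. \<lambda>v\<in>V. c (\<rho> v)) = LB V"
proof (rule lbps.PiM_eqI[OF fin])
  show "sets (distr (LB J) (LB V) (\<lambda>c. \<lambda>v\<in>V. c (\<rho> v))) = sets (LB V)" by simp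
next
  fix A :: "'i \<Rightarrow> real set" assume A: "\<And>i. i \<in> V \<Longrightarrow> A i \<in> sets lborel"
  have finJ: "finite J" using bij fin bij_betw_finite by blast
  have rm: "\<rho> v \<in> J" if "v \<in> V" for v using bij that by (auto simp: bij_betw_def)
  have meas: "(\<lambda>c. \<lambda>v\<in>V. c (\<rho> v)) \<in> measurable (LB J) (LB V)"
    by (rule measurable_restrict) (use rm in auto)
  let ?iv = "inv_into V \<rho>"
  have iv: "?iv j \<in> V" "\<rho> (?iv j) = j" if "j \<in> J" for j
    using bij that by (auto simp: bij_betw_def inv_into_into f_inv_into_f)
  have iv2: "?iv (\<rho> v) = v" if "v \<in> V" for v
    using bij that by (auto simp: bij_betw_def)
  have set_eq: "(\<lambda>c. \<lambda>v\<in>V. c (\<rho> v)) -` PiE V A \<inter> space (LB J) = PiE J (\<lambda>j. A (?iv j))"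
  proof (intro set_eqI iffI)
    fix c assume "c \<in> (\<lambda>c. \<lambda>v\<in>V. c (\<rho> v)) -` PiE V A \<inter> space (LB J)"
    then have c1: "c \<in> extensional J" and c2: "\<And>v. v \<in> V \<Longrightarrow> c (\<rho> v) \<in> A v"
      by (auto simp: space_PiM PiE_iff)
    have "c j \<in> A (?iv j)" if j: "j \<in> J" for j
      using c2[OF iv(1)[OF j]] iv(2)[OF j] by simp
    then show "c \<in> PiE J (\<lambda>j. A (?iv j))"
      using c1 by (simp add: PiE_iff)
  next
    fix c assume c: "c \<in> PiE J (\<lambda>j. A (?iv j))"
    then have c1: "c \<in> extensional J" and c2: "\<And>j. j \<in> J \<Longrightarrow> c j \<in> A (?iv j)"
      by (auto simp: PiE_iff)
    have "c (\<rho> v) \<in> A v" if v: "v \<in> V" for v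
      using c2[OF rm[OF v]] iv2[OF v] by simp
    then have "(\<lambda>v\<in>V. c (\<rho> v)) \<in> PiE V A" by (simp add: PiE_iff)
    moreover have "c \<in> space (LB J)" using c1 by (simp add: space_PiM PiE_iff)
    ultimately show "c \<in> (\<lambda>c. \<lambda>v\<in>V. c (\<rho> v)) -` PiE V A \<inter> space (LB J)"
      by simp
  qed
  have "emeasure (distr (LB J) (LB V) (\<lambda>c. \<lambda>v\<in>V. c (\<rho> v))) (PiE V A)
      = emeasure (LB J) (PiE J (\<lambda>j. A (?iv j)))"
    using A meas by (subst emeasure_distr) (auto intro!: sets_PiM_I_finite fin simp: set_eq)
  also have "\<dots> = (\<Prod>j\<in>J. emeasure lborel (A (?iv j)))"
    using A iv finJ by (intro lbps.emeasure_PiM) auto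
  also have "\<dots> = (\<Prod>v\<in>V. emeasure lborel (A v))"
    using prod.reindex_bij_betw[OF bij, of "\<lambda>j. emeasure lborel (A (?iv j))"] iv2
    by (simp cong: prod.cong)
  finally show "emeasure (distr (LB J) (LB V) (\<lambda>c. \<lambda>v\<in>V. c (\<rho> v))) (PiE V A) = (\<Prod>v\<in>V. emeasure lborel (A v))" .
qed

lemma null_reindex_scale:
  fixes V :: "'i set" and J :: "'j set"
  assumes fin: "finite V" and bij: "bij_betw \<rho> V J" and s: "\<forall>v\<in>V. s v \<noteq> 0"
    and Y: "Y \<in> null_sets (LB V)"
  shows "{c \<in> space (LB J). (\<lambda>v\<in>V. s v * c (\<rho> v)) \<in> Y} \<in> null_sets (LB J)"
proof -
  let ?Y' = "{y \<in> space (LB V). (\<lambda>v\<in>V. s v * y v) \<in> Y}"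
  have Y': "?Y' \<in> null_sets (LB V)" by (rule null_scale[OF fin s Y])
  have rm: "\<rho> v \<in> J" if "v \<in> V" for v using bij that by (auto simp: bij_betw_def)
  have meas: "(\<lambda>c. \<lambda>v\<in>V. c (\<rho> v)) \<in> measurable (LB J) (LB V)"
    by (rule measurable_restrict) (use rm in auto)
  have eq: "{c \<in> space (LB J). (\<lambda>v\<in>V. s v * c (\<rho> v)) \<in> Y} = (\<lambda>c. \<lambda>v\<in>V. c (\<rho> v)) -` ?Y' \<inter> space (LB J)"
  proof -
    have "(\<lambda>v\<in>V. s v * (\<lambda>v\<in>V. c (\<rho> v)) v) = (\<lambda>v\<in>V. s v * c (\<rho> v))" for c
      by (auto intro!: ext)
    moreover have "c \<in> space (LB J) \<Longrightarrow> (\<lambda>v\<in>V. c (\<rho> v)) \<in> space (LB V)" for c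
      using meas by (auto simp: measurable_def)
    ultimately show ?thesis by auto
  qed
  have "emeasure (LB J) ((\<lambda>c. \<lambda>v\<in>V. c (\<rho> v)) -` ?Y' \<inter> space (LB J)) = emeasure (distr (LB J) (LB V) (\<lambda>c. \<lambda>v\<in>V. c (\<rho> v))) ?Y'"
    using Y' meas by (subst emeasure_distr) auto
  also have "\<dots> = 0" using null_setsD1[OF Y'] by (simp add: reindex_distr[OF fin bij])
  finally show ?thesis unfolding eq using measurable_sets[OF meas, of ?Y'] Y' by auto
qed

locale pctf_setup =
  fixes I M R :: nat and Mg :: "nat \<Rightarrow> nat set" and e :: "nat \<Rightarrow> nat \<Rightarrow> nat"
  assumes I2: "I \<ge> 2" and R1: "R \<ge> 1"
    and ne: "\<And>g. g \<in> {1,2,3} \<Longrightarrow> Mg g \<noteq> {}"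
    and disj: "\<And>g h. g \<in> {1,2,3} \<Longrightarrow> h \<in> {1,2,3} \<Longrightarrow> g \<noteq> h \<Longrightarrow> Mg g \<inter> Mg h = {}"
    and cover: "Mg 1 \<union> Mg 2 \<union> Mg 3 = {1..M}"
    and ebij: "\<And>g. g \<in> {1,2,3} \<Longrightarrow> bij_betw (e g) {..<card (Mg g)} (Mg g)"
begin

definition Id :: "nat \<Rightarrow> nat" where "Id g = (I - 1) * card (Mg g) + 1"
definition K where "K = cp_idx (Id 1) (Id 2) (Id 3) R"
definition J where "J = pctf_idx I M R"
definition U :: "(nat \<times> nat \<times> nat) set" where "U = {(g, 0, r) | g r. g \<in> {1,2,3} \<and> r < R}"
definition ell :: "nat \<times> nat \<times> nat" where "ell = (0, R - 1, 0)"
definition V0 :: "(nat \<times> nat \<times> nat) set" where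
  "V0 = {(0, r, 0) | r. r + 1 < R} \<union> {(g, k, r) | g k r. g \<in> {1,2,3} \<and> 1 \<le> k \<and> k < Id g \<and> r < R}"
definition \<rho> :: "nat \<times> nat \<times> nat \<Rightarrow> nat \<times> nat \<times> nat \<times> nat" where
  "\<rho> v = (case v of (d, k, r) \<Rightarrow> if d = 0 then (0, 0, k, 0)
      else (1, e d ((k - 1) div (I - 1)), r, (k - 1) mod (I - 1)))"
definition grp :: "nat \<Rightarrow> nat" where
  "grp m = (if m \<in> Mg 1 then 1 else if m \<in> Mg 2 then 2 else 3)"
definition pos :: "nat \<Rightarrow> nat" where
  "pos m = inv_into {..<card (Mg (grp m))} (e (grp m)) m"
definition \<tau> :: "nat \<times> nat \<times> nat \<times> nat \<Rightarrow> nat \<times> nat \<times> nat" where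
  "\<tau> j = (case j of (c, m, r, i) \<Rightarrow> if c = 0 then (0, r, 0) else (grp m, 1 + pos m * (I - 1) + i, r))"

lemma Mg_sub_all: "g \<in> {1,2,3} \<Longrightarrow> Mg g \<subseteq> {1..M}"
proof -
  assume g: "g \<in> {1,2,3}"
  have "Mg 1 \<union> Mg 2 \<union> Mg 3 \<subseteq> {1..M}" using cover by simp
  then have "Mg 1 \<subseteq> {1..M}" "Mg 2 \<subseteq> {1..M}" "Mg 3 \<subseteq> {1..M}" by simp_all
  then show ?thesis using g by (elim insertE) simp_all
qed

lemma finMg: "g \<in> {1,2,3} \<Longrightarrow> finite (Mg g)"
  using Mg_sub_all finite_subset by blast

lemma card_pos: "g \<in> {1,2,3} \<Longrightarrow> card (Mg g) > 0"
  using finMg ne by (simp add: card_gt_0_iff)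

lemma e_in: "g \<in> {1,2,3} \<Longrightarrow> q < card (Mg g) \<Longrightarrow> e g q \<in> Mg g"
  using ebij by (auto simp: bij_betw_def)

lemma Mg_sub: "g \<in> {1,2,3} \<Longrightarrow> m \<in> Mg g \<Longrightarrow> m \<in> {1..M}"
  using Mg_sub_all by blast

lemma grp_in: "m \<in> {1..M} \<Longrightarrow> grp m \<in> {1,2,3} \<and> m \<in> Mg (grp m)"
proof -
  assume "m \<in> {1..M}"
  then have "m \<in> Mg 1 \<union> Mg 2 \<union> Mg 3" by (simp only: cover)
  then show ?thesis unfolding grp_def by auto
qed

lemma grp_eq: "g \<in> {1,2,3} \<Longrightarrow> m \<in> Mg g \<Longrightarrow> grp m = g"
proof -
  assume g: "g \<in> {1,2,3}" and m: "m \<in> Mg g"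
  have d: "Mg 1 \<inter> Mg 2 = {}" "Mg 1 \<inter> Mg 3 = {}" "Mg 2 \<inter> Mg 3 = {}"
    using disj by auto
  show ?thesis using g
  proof (elim insertE)
    assume "g = 1" then show ?thesis using m by (simp add: grp_def)
  next
    assume "g = 2" then show ?thesis using m d by (auto simp add: grp_def)
  next
    assume "g \<in> {}" then show ?thesis by simp
  next
    assume "g = 3" then show ?thesis using m d by (auto simp add: grp_def)
  qed
qed

lemma pos_props: "m \<in> {1..M} \<Longrightarrow> pos m < card (Mg (grp m)) \<and> e (grp m) (pos m) = m"
proof -
  assume m: "m \<in> {1..M}"
  then have g: "grp m \<in> {1,2,3}" "m \<in> Mg (grp m)" using grp_in by auto
  have b: "bij_betw (e (grp m)) {..<card (Mg (grp m))} (Mg (grp m))" using ebij g by auto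
  then have "m \<in> e (grp m) ` {..<card (Mg (grp m))}" using g by (simp add: bij_betw_def)
  then show ?thesis unfolding pos_def
    using inv_into_into f_inv_into_f by (metis lessThan_iff)
qed

lemma pos_e: "g \<in> {1,2,3} \<Longrightarrow> q < card (Mg g) \<Longrightarrow> pos (e g q) = q"
proof -
  assume g: "g \<in> {1,2,3}" and q: "q < card (Mg g)"
  have "grp (e g q) = g" using grp_eq e_in g q by auto
  then show ?thesis using ebij[OF g] q unfolding pos_def by (auto simp: bij_betw_def)
qed

lemma K_iff: "(d, k, r) \<in> K \<longleftrightarrow> (d = 0 \<and> k < R \<and> r = 0) \<or> (d \<in> {1,2,3} \<and> k < Id d \<and> r < R)"
  unfolding K_def cp_idx_def by auto

lemma J_iff: "(c, m, r, i) \<in> J \<longleftrightarrow> (c = 0 \<and> m = 0 \<and> r + 1 < R \<and> i = 0) \<or> (c = 1 \<and> m \<in> {1..M} \<and> r < R \<and> i + 1 < I)"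
  unfolding J_def pctf_idx_def by auto

lemma finK: "finite K"
proof -
  have "K \<subseteq> {0..3} \<times> {..<max R (Id 1 + Id 2 + Id 3)} \<times> {..<R}"
    by (auto simp: K_def cp_idx_def)
  then show ?thesis using finite_subset by blast
qed

lemma ell_notin: "ell \<notin> V0"
  by (auto simp: ell_def V0_def)

lemma K_split: "K = U \<union> insert ell V0"
  using R1 by (auto simp: K_def cp_idx_def U_def ell_def V0_def Id_def)

lemma U_disj: "U \<inter> insert ell V0 = {}"
  by (auto simp: U_def ell_def V0_def)

lemma finU: "finite U"
  by (rule finite_subset[OF _ finK]) (auto simp add: K_split)

lemma finV0: "finite V0"
  by (rule finite_subset[OF _ finK]) (auto simp add: K_split)

lemma divmod_k:
  assumes "1 \<le> k" "k < Id g" "g \<in> {1,2,3}"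
  shows "(k - 1) div (I - 1) < card (Mg g)" "(k - 1) mod (I - 1) + 1 < I"
proof -
  have "k - 1 < (I - 1) * card (Mg g)" using assms by (simp add: Id_def)
  then show "(k - 1) div (I - 1) < card (Mg g)"
    by (intro less_mult_imp_div_less) (simp add: mult.commute)
  have "(k - 1) mod (I - 1) < I - 1" using I2 by simp
  then show "(k - 1) mod (I - 1) + 1 < I" by simp
qed

lemma rho0: "\<rho> (0, r, 0) = (0, 0, r, 0)" by (simp add: \<rho>_def)
lemma rhog: "d \<noteq> 0 \<Longrightarrow> \<rho> (d, k, r) = (1, e d ((k - 1) div (I - 1)), r, (k - 1) mod (I - 1))"
  by (simp add: \<rho>_def)
lemma tau0: "\<tau> (0, m, r, i) = (0, r, 0)" by (simp add: \<tau>_def)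
lemma tau1: "c \<noteq> 0 \<Longrightarrow> \<tau> (c, m, r, i) = (grp m, 1 + pos m * (I - 1) + i, r)" by (simp add: \<tau>_def)

lemma V0_cases:
  assumes "v \<in> V0"
  obtains r where "v = (0, r, 0)" "r + 1 < R"
  | g k r where "v = (g, k, r)" "g \<in> {1,2,3}" "1 \<le> k" "k < Id g" "r < R"
  using assms unfolding V0_def by blast

lemma V0_intro1: "r + 1 < R \<Longrightarrow> (0, r, 0) \<in> V0" by (simp add: V0_def)
lemma V0_intro2: "g \<in> {1,2,3} \<Longrightarrow> 1 \<le> k \<Longrightarrow> k < Id g \<Longrightarrow> r < R \<Longrightarrow> (g, k, r) \<in> V0"
  unfolding V0_def by blast

lemma J_cases:
  assumes "j \<in> J"
  obtains r where "j = (0, 0, r, 0)" "r + 1 < R"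
  | m r i where "j = (1, m, r, i)" "m \<in> {1..M}" "r < R" "i + 1 < I"
  using assms unfolding J_def pctf_idx_def by blast

lemma bij_rho: "bij_betw \<rho> V0 J"
proof (rule bij_betw_byWitness[where f' = \<tau>])
  show "\<forall>v\<in>V0. \<tau> (\<rho> v) = v"
  proof
    fix v assume v: "v \<in> V0"
    then show "\<tau> (\<rho> v) = v"
    proof (cases rule: V0_cases)
      case (1 r) then show ?thesis by (simp add: rho0 tau0)
    next
      case (2 g k r)
      let ?q = "(k - 1) div (I - 1)" and ?i = "(k - 1) mod (I - 1)"
      have g0: "g \<noteq> 0" using 2 by auto
      have q: "?q < card (Mg g)" using divmod_k 2 by auto
      have "grp (e g ?q) = g" using grp_eq e_in 2 q by auto
      moreover have "pos (e g ?q) = ?q" using pos_e 2 q by auto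
      moreover have "1 + ?q * (I - 1) + ?i = k" using 2(3)
        using div_mult_mod_eq[of "k - 1" "I - 1"] by linarith
      ultimately show ?thesis using 2 g0 by (simp add: rhog tau1)
    qed
  qed
next
  show "\<forall>j\<in>J. \<rho> (\<tau> j) = j"
  proof
    fix j assume j: "j \<in> J"
    then show "\<rho> (\<tau> j) = j"
    proof (cases rule: J_cases)
      case (1 r) then show ?thesis by (simp add: rho0 tau0)
    next
      case (2 m r i)
      have g: "grp m \<in> {1,2,3}" using grp_in 2 by auto
      then have g0: "grp m \<noteq> 0" by auto
      have i: "i < I - 1" using 2 by simp
      have "(pos m * (I - 1) + i) div (I - 1) = pos m" "(pos m * (I - 1) + i) mod (I - 1) = i"
        using i by auto
      then show ?thesis using 2 g0 pos_props[OF 2(2)] by (simp add: rhog tau1)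
    qed
  qed
next
  show "\<rho> ` V0 \<subseteq> J"
  proof
    fix j assume "j \<in> \<rho> ` V0"
    then obtain v where v: "v \<in> V0" "j = \<rho> v" by auto
    from v(1) show "j \<in> J"
    proof (cases rule: V0_cases)
      case (1 r) then show ?thesis using v by (simp add: rho0 J_iff)
    next
      case (2 g k r)
      have g0: "g \<noteq> 0" using 2 by auto
      have "e g ((k - 1) div (I - 1)) \<in> {1..M}" using divmod_k[OF 2(3,4,2)] e_in Mg_sub 2 by blast
      then show ?thesis using v 2 g0 divmod_k[OF 2(3,4,2)] by (simp add: rhog J_iff)
    qed
  qed
next
  show "\<tau> ` J \<subseteq> V0"
  proof
    fix v assume "v \<in> \<tau> ` J"
    then obtain j where j: "j \<in> J" "v = \<tau> j" by auto
    from j(1) show "v \<in> V0"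
    proof (cases rule: J_cases)
      case (1 r) then show ?thesis using j by (simp add: tau0 V0_intro1)
    next
      case (2 m r i)
      have g: "grp m \<in> {1,2,3}" using grp_in 2 by auto
      have p: "pos m < card (Mg (grp m))" using pos_props 2 by auto
      have "pos m * (I - 1) + i < (pos m + 1) * (I - 1)" using 2 by simp
      also have "\<dots> \<le> card (Mg (grp m)) * (I - 1)" using p by (intro mult_right_mono) auto
      finally have "1 + pos m * (I - 1) + i < Id (grp m)" by (simp add: Id_def mult.commute)
      then show ?thesis using j 2 g by (simp add: tau1 V0_intro2)
    qed
  qed
qed

end

context pctf_setup
begin

definition lamc :: "(nat \<times> nat \<times> nat \<times> nat \<Rightarrow> real) \<Rightarrow> nat \<Rightarrow> real" where
  "lamc c r = (if r + 1 < R then c (0, 0, r, 0) else 1 - (\<Sum>r'<R - 1. c (0, 0, r', 0)))"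

definition wt :: "(nat \<Rightarrow> nat \<Rightarrow> real) \<Rightarrow> nat \<Rightarrow> real" where
  "wt \<alpha> r = \<alpha> 1 r * \<alpha> 2 r * \<alpha> 3 r"

definition Scp :: "(nat \<Rightarrow> nat \<Rightarrow> real) \<Rightarrow> real \<Rightarrow> (nat \<times> nat \<times> nat \<times> nat \<Rightarrow> real) \<Rightarrow> nat \<times> nat \<times> nat \<Rightarrow> real" where
  "Scp \<alpha> t0 c = (\<lambda>x\<in>K. case x of (d, k, r) \<Rightarrow>
      if d = 0 then t0 * lamc c k / wt \<alpha> k else \<alpha> d r * (if k = 0 then 1 else c (\<rho> (d, k, r))))"

lemma U_iff: "(d, k, r) \<in> U \<longleftrightarrow> d \<in> {1,2,3} \<and> k = 0 \<and> r < R"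
  unfolding U_def by blast

lemma V0_iff: "(d, k, r) \<in> V0 \<longleftrightarrow> (d = 0 \<and> k + 1 < R \<and> r = 0) \<or> (d \<in> {1,2,3} \<and> 1 \<le> k \<and> k < Id d \<and> r < R)"
  unfolding V0_def by blast

lemma generic_choice:
  assumes N: "N \<in> null_sets (cp_measure (Id 1) (Id 2) (Id 3) R)"
  shows "\<exists>\<alpha> t0 Z. (\<forall>g\<in>{1,2,3}. \<forall>r<R. \<alpha> g r \<noteq> 0) \<and> t0 \<noteq> 0 \<and> Z \<in> null_sets (LB J) \<and>
            (\<forall>c\<in>space (LB J) - Z. Scp \<alpha> t0 c \<notin> N)"
proof -
  define Vl where "Vl = insert ell V0"
  have finVl: "finite Vl" using finV0 by (simp add: Vl_def)
  have NK: "N \<in> null_sets (LB (U \<union> Vl))"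
  proof -
    have "cp_measure (Id 1) (Id 2) (Id 3) R = LB K" by (simp only: cp_measure_def K_def)
    then show ?thesis using N by (simp only: K_split Vl_def)
  qed
  have "AE u in LB U. {v \<in> space (LB Vl). merge U Vl (u, v) \<in> N} \<in> null_sets (LB Vl) \<and> (\<forall>j\<in>U. u j \<noteq> 0)"
  proof -
    have A1: "AE u in LB U. {v \<in> space (LB Vl). merge U Vl (u, v) \<in> N} \<in> null_sets (LB Vl)"
      by (rule null_section_AE[OF finU finVl _ NK]) (use U_disj in \<open>simp add: Vl_def\<close>)
    have A2: "AE u in LB U. \<forall>j\<in>U. u j \<noteq> 0" by (rule AE_all_coords_nonzero[OF finU])
    from A1 A2 show ?thesis by eventually_elim auto
  qed
  then obtain u0 where u0: "u0 \<in> space (LB U)"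
    and N1: "{v \<in> space (LB Vl). merge U Vl (u0, v) \<in> N} \<in> null_sets (LB Vl)"
    and u0nz: "\<forall>j\<in>U. u0 j \<noteq> 0"
    using AE_LB_ex[OF finU] by blast
  define \<alpha> where "\<alpha> g r = u0 (g, 0, r)" for g r
  have \<alpha>nz: "\<forall>g\<in>{1,2,3}. \<forall>r<R. \<alpha> g r \<noteq> 0"
    using u0nz by (auto simp: \<alpha>_def U_iff)
  define w where "w r = wt \<alpha> r" for r
  have wnz: "w r \<noteq> 0" if "r < R" for r
    using \<alpha>nz that by (simp add: w_def wt_def)
  have wl: "w (R - 1) \<noteq> 0" using wnz R1 by simp
  define h where "h x = - (\<Sum>r<R - 1. w r * x (0, r, 0)) / w (R - 1)" for x :: "nat \<times> nat \<times> nat \<Rightarrow> real"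
  let ?N1 = "{v \<in> space (LB Vl). merge U Vl (u0, v) \<in> N}"
  have ellVl: "ell \<in> Vl" by (simp add: Vl_def)
  have inVl: "(0, r, 0) \<in> Vl" if "r < R" for r
    using that by (auto simp: Vl_def V0_iff ell_def)
  have hm: "h \<in> borel_measurable (LB Vl)"
  proof -
    have "(\<lambda>x. x (0, r, 0)) \<in> borel_measurable (LB Vl)" if "r < R - 1" for r
    proof -
      have "(\<lambda>x. x (0, r, 0)) \<in> measurable (LB Vl) lborel"
        using inVl[of r] that by (intro measurable_component_singleton) auto
      then show ?thesis by (simp add: measurable_lborel2)
    qed
    then show ?thesis unfolding h_def
      by (intro borel_measurable_divide borel_measurable_uminus borel_measurable_sum
          borel_measurable_times borel_measurable_const) auto
  qed
  have hind: "h (x(ell := y)) = h x" for x y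
  proof -
    have "(\<Sum>r<R - 1. w r * (x(ell := y)) (0, r, 0)) = (\<Sum>r<R - 1. w r * x (0, r, 0))"
      by (intro sum.cong) (auto simp: ell_def)
    then show ?thesis by (simp add: h_def)
  qed
  let ?N2 = "{x \<in> space (LB Vl). x(ell := (1 / w (R - 1)) * x ell + h x) \<in> ?N1}"
  have N2: "?N2 \<in> null_sets (LB Vl)"
    by (rule null_fiber_affine[OF finVl ellVl _ hm hind N1]) (use wl in simp)
  have Vl2: "Vl = {ell} \<union> V0" by (simp add: Vl_def)
  have "AE z in LB {ell}. {y \<in> space (LB V0). merge {ell} V0 (z, y) \<in> ?N2} \<in> null_sets (LB V0) \<and> z ell \<noteq> 0"
  proof -
    have A1: "AE z in LB {ell}. {y \<in> space (LB V0). merge {ell} V0 (z, y) \<in> ?N2} \<in> null_sets (LB V0)"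
      by (rule null_section_AE) (use N2 finV0 ell_notin in \<open>simp_all add: Vl2\<close>)
    have A2: "AE z in LB {ell}. z ell \<noteq> 0" by (rule AE_coord_nonzero) auto
    from A1 A2 show ?thesis by eventually_elim auto
  qed
  then obtain z0 where z0: "z0 \<in> space (LB {ell})"
    and N3: "{y \<in> space (LB V0). merge {ell} V0 (z0, y) \<in> ?N2} \<in> null_sets (LB V0)"
    and z0nz: "z0 ell \<noteq> 0"
    using AE_LB_ex[of "{ell}"] by blast
  define t0 where "t0 = z0 ell"
  let ?N3 = "{y \<in> space (LB V0). merge {ell} V0 (z0, y) \<in> ?N2}"
  define s where "s v = (case v of (d, k, r) \<Rightarrow> if d = 0 then t0 / w k else \<alpha> d r)" for v :: "nat \<times> nat \<times> nat"
  have snz: "\<forall>v\<in>V0. s v \<noteq> 0"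
  proof
    fix v assume "v \<in> V0"
    then show "s v \<noteq> 0"
    proof (cases rule: V0_cases)
      case (1 r) then show ?thesis using wnz[of r] z0nz by (simp add: s_def t0_def)
    next
      case (2 g k r) then show ?thesis using \<alpha>nz by (auto simp: s_def)
    qed
  qed
  define Z where "Z = {c \<in> space (LB J). (\<lambda>v\<in>V0. s v * c (\<rho> v)) \<in> ?N3}"
  have Z: "Z \<in> null_sets (LB J)"
    unfolding Z_def by (rule null_reindex_scale[OF finV0 bij_rho snz N3])
  have main: "c \<in> Z" if c: "c \<in> space (LB J)" and cN: "Scp \<alpha> t0 c \<in> N" for c
  proof -
    define y where "y = (\<lambda>v\<in>V0. s v * c (\<rho> v))"
    have ysp: "y \<in> space (LB V0)" by (simp add: y_def space_PiM)
    define x where "x = merge {ell} V0 (z0, y)"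
    have xsp: "x \<in> space (LB Vl)"
      using z0 ysp by (auto simp: x_def Vl2 space_PiM PiE_iff merge_def extensional_def)
    define x' where "x' = x(ell := (1 / w (R - 1)) * x ell + h x)"
    have x'sp: "x' \<in> space (LB Vl)"
      using xsp ellVl by (auto simp: x'_def space_PiM PiE_iff extensional_def)
    have xr: "x (0, r, 0) = t0 / w r * c (0, 0, r, 0)" if "r + 1 < R" for r
    proof -
      have "(0, r, 0) \<in> V0" "(0, r, 0) \<noteq> ell" using that by (auto simp: V0_iff ell_def)
      then show ?thesis by (simp add: x_def merge_def y_def s_def rho0)
    qed
    have xell: "x ell = t0" by (simp add: x_def merge_def t0_def)
    have sumeq: "(\<Sum>r<R - 1. w r * x (0, r, 0)) = t0 * (\<Sum>r<R - 1. c (0, 0, r, 0))"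
    proof -
      have "(\<Sum>r<R - 1. w r * x (0, r, 0)) = (\<Sum>r<R - 1. t0 * c (0, 0, r, 0))"
      proof (intro sum.cong refl)
        fix r assume "r \<in> {..<R - 1}"
        then have r: "r + 1 < R" by auto
        then show "w r * x (0, r, 0) = t0 * c (0, 0, r, 0)"
          using xr[OF r] wnz[of r] by (simp add: field_simps)
      qed
      then show ?thesis by (simp add: sum_distrib_left)
    qed
    have x'ell: "x' ell = t0 * (1 - (\<Sum>r<R - 1. c (0, 0, r, 0))) / w (R - 1)"
    proof -
      have hx: "h x = - (t0 * (\<Sum>r<R - 1. c (0, 0, r, 0))) / w (R - 1)"
        unfolding h_def sumeq ..
      have "x' ell = (1 / w (R - 1)) * t0 + h x" by (simp add: x'_def xell)
      also have "\<dots> = t0 * (1 - (\<Sum>r<R - 1. c (0, 0, r, 0))) / w (R - 1)"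
        unfolding hx using wl by (simp add: field_simps)
      finally show ?thesis .
    qed
    have eq: "merge U Vl (u0, x') = Scp \<alpha> t0 c"
    proof
      fix i :: "nat \<times> nat \<times> nat"
      obtain d k r where i: "i = (d, k, r)" by (cases i) auto
      show "merge U Vl (u0, x') i = Scp \<alpha> t0 c i"
      proof (cases "i \<in> U")
        case True
        then have "d \<in> {1,2,3}" "k = 0" "r < R" using i U_iff by auto
        moreover have "i \<in> K" using True K_split by auto
        ultimately show ?thesis using True i by (auto simp: merge_def Scp_def \<alpha>_def)
      next
        case nU: False
        show ?thesis
        proof (cases "i = ell")
          case True
          have "i \<in> K" using True K_split by auto
          moreover have "\<not> (R - 1 + 1 < R)" by simp
          ultimately show ?thesis using True nU ellVl x'ell
            by (simp add: merge_def Scp_def lamc_def ell_def w_def)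
        next
          case nell: False
          show ?thesis
          proof (cases "i \<in> V0")
            case True
            have iK: "i \<in> K" using True K_split by auto
            have mi: "merge U Vl (u0, x') i = y i"
              using True nU nell by (simp add: merge_def Vl_def x'_def x_def)
            from True show ?thesis
            proof (cases rule: V0_cases)
              case (1 r')
              then show ?thesis using iK mi True wnz[of r']
                by (simp add: Scp_def lamc_def y_def s_def rho0 w_def)
            next
              case (2 g k' r')
              then have "g \<noteq> 0" "k' \<noteq> 0" by auto
              then show ?thesis using iK mi True 2
                by (simp add: Scp_def y_def s_def)
            qed
          next
            case False
            then have "i \<notin> K" using nU nell K_split by auto
            then show ?thesis using nU nell False by (simp add: merge_def Scp_def Vl_def)
          qed
        qed
      qed
    qed
    have "x' \<in> ?N1" using x'sp eq cN by simp
    then have "x \<in> ?N2" using xsp by (simp add: x'_def)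
    then have "y \<in> ?N3" using ysp by (simp add: x_def)
    then show "c \<in> Z" using c by (simp add: Z_def y_def)
  qed
  show ?thesis
    using \<alpha>nz z0nz Z main by (auto simp: t0_def intro!: exI[of _ \<alpha>] exI[of _ t0] exI[of _ Z])
qed

end

lemma triple_sum:
  fixes l :: "'r \<Rightarrow> real"
  shows "(\<Sum>r\<in>A. l r * (\<Sum>i\<in>B. f i r) * (\<Sum>j\<in>B. g j r) * (\<Sum>k\<in>B. h k r)) =
    (\<Sum>k\<in>B. \<Sum>j\<in>B. \<Sum>i\<in>B. \<Sum>r\<in>A. l r * f i r * g j r * h k r)"
proof -
  have "(\<Sum>r\<in>A. l r * (\<Sum>i\<in>B. f i r) * (\<Sum>j\<in>B. g j r) * (\<Sum>k\<in>B. h k r)) =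
      (\<Sum>r\<in>A. \<Sum>k\<in>B. \<Sum>j\<in>B. \<Sum>i\<in>B. l r * f i r * g j r * h k r)"
    by (simp add: sum_distrib_left sum_distrib_right)
  also have "\<dots> = (\<Sum>k\<in>B. \<Sum>r\<in>A. \<Sum>j\<in>B. \<Sum>i\<in>B. l r * f i r * g j r * h k r)"
    by (rule sum.swap)
  also have "\<dots> = (\<Sum>k\<in>B. \<Sum>j\<in>B. \<Sum>r\<in>A. \<Sum>i\<in>B. l r * f i r * g j r * h k r)"
    by (intro sum.cong refl sum.swap)
  also have "\<dots> = (\<Sum>k\<in>B. \<Sum>j\<in>B. \<Sum>i\<in>B. \<Sum>r\<in>A. l r * f i r * g j r * h k r)"
    by (intro sum.cong refl sum.swap)
  finally show ?thesis .
qed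

context pctf_setup
begin

definition Xa :: "(nat \<Rightarrow> nat \<Rightarrow> nat \<Rightarrow> real) \<Rightarrow> nat \<Rightarrow> nat \<Rightarrow> nat \<Rightarrow> real" where
  "Xa a g k r = (if k = 0 then 1 else a (e g ((k - 1) div (I - 1))) r ((k - 1) mod (I - 1)))"

definition mm :: "nat \<Rightarrow> nat \<Rightarrow> nat" where
  "mm g k = e g (if k = 0 then 0 else (k - 1) div (I - 1))"

definition Pk :: "nat \<Rightarrow> nat \<Rightarrow> bool" where
  "Pk k i \<longleftrightarrow> k = 0 \<or> i = (k - 1) mod (I - 1)"

lemma mm_in: "g \<in> {1,2,3} \<Longrightarrow> k < Id g \<Longrightarrow> mm g k \<in> Mg g"
  using e_in card_pos divmod_k[of k g] by (cases "k = 0") (auto simp: mm_def)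

lemma X_sum:
  assumes Th: "pctf_Theta I M R lam a" and g: "g \<in> {1,2,3}" and k: "k < Id g" and r: "r < R"
  shows "Xa a g k r = (\<Sum>i<I. if Pk k i then a (mm g k) r i else 0)"
proof (cases "k = 0")
  case True
  have "mm g k \<in> {1..M}" using mm_in[OF g k] Mg_sub[OF g] by blast
  then have "(\<Sum>i<I. a (mm g k) r i) = 1" using Th r by (auto simp: pctf_Theta_def)
  then show ?thesis using True by (simp add: Xa_def Pk_def)
next
  case False
  have "(k - 1) mod (I - 1) < I - 1" using I2 by simp
  then have "(k - 1) mod (I - 1) < I" by linarith
  then show ?thesis using False by (simp add: Xa_def Pk_def mm_def sum.delta')
qed

definition Hs :: "(nat \<Rightarrow> real) \<Rightarrow> (nat \<Rightarrow> nat \<Rightarrow> nat \<Rightarrow> real) \<Rightarrow> nat \<Rightarrow> nat \<Rightarrow> nat \<Rightarrow> nat \<Rightarrow> nat \<Rightarrow> nat \<Rightarrow> real" where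
  "Hs lam a m1 m2 m3 i1 i2 i3 = (\<Sum>r<R. lam r * a m1 r i1 * a m2 r i2 * a m3 r i3)"

lemma expand:
  assumes Th: "pctf_Theta I M R lam a" and k: "k1 < Id 1" "k2 < Id 2" "k3 < Id 3"
  shows "(\<Sum>r<R. lam r * Xa a 1 k1 r * Xa a 2 k2 r * Xa a 3 k3 r) =
    (\<Sum>i3<I. \<Sum>i2<I. \<Sum>i1<I. if Pk k1 i1 \<and> Pk k2 i2 \<and> Pk k3 i3 then Hs lam a (mm 1 k1) (mm 2 k2) (mm 3 k3) i1 i2 i3 else 0)"
proof -
  have "(\<Sum>r<R. lam r * Xa a 1 k1 r * Xa a 2 k2 r * Xa a 3 k3 r) =
     (\<Sum>r<R. lam r * (\<Sum>i<I. if Pk k1 i then a (mm 1 k1) r i else 0) * (\<Sum>i<I. if Pk k2 i then a (mm 2 k2) r i else 0)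
        * (\<Sum>i<I. if Pk k3 i then a (mm 3 k3) r i else 0))"
  proof (intro sum.cong refl)
    fix r assume "r \<in> {..<R}"
    then have r: "r < R" by simp
    have X1: "Xa a 1 k1 r = (\<Sum>i<I. if Pk k1 i then a (mm 1 k1) r i else 0)"
      by (rule X_sum[OF Th _ k(1) r]) simp
    have X2: "Xa a 2 k2 r = (\<Sum>i<I. if Pk k2 i then a (mm 2 k2) r i else 0)"
      by (rule X_sum[OF Th _ k(2) r]) simp
    have X3: "Xa a 3 k3 r = (\<Sum>i<I. if Pk k3 i then a (mm 3 k3) r i else 0)"
      by (rule X_sum[OF Th _ k(3) r]) simp
    show "lam r * Xa a 1 k1 r * Xa a 2 k2 r * Xa a 3 k3 r =
      lam r * (\<Sum>i<I. if Pk k1 i then a (mm 1 k1) r i else 0) * (\<Sum>i<I. if Pk k2 i then a (mm 2 k2) r i else 0)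
        * (\<Sum>i<I. if Pk k3 i then a (mm 3 k3) r i else 0)"
      by (simp only: X1 X2 X3)
  qed
  also have "\<dots> = (\<Sum>i3<I. \<Sum>i2<I. \<Sum>i1<I. \<Sum>r<R. lam r * (if Pk k1 i1 then a (mm 1 k1) r i1 else 0)
       * (if Pk k2 i2 then a (mm 2 k2) r i2 else 0) * (if Pk k3 i3 then a (mm 3 k3) r i3 else 0))"
    by (rule triple_sum)
  also have "\<dots> = (\<Sum>i3<I. \<Sum>i2<I. \<Sum>i1<I. if Pk k1 i1 \<and> Pk k2 i2 \<and> Pk k3 i3 then Hs lam a (mm 1 k1) (mm 2 k2) (mm 3 k3) i1 i2 i3 else 0)"
    unfolding Hs_def by (intro sum.cong refl) auto
  finally show ?thesis .
qed

lemma mu_point: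
  assumes mu: "pctf_mu I R T lam a = pctf_mu I R T lam' a'"
    and jkl: "j < k" "k < l" "{j, k, l} \<in> T" and i: "i1 < I" "i2 < I" "i3 < I"
  shows "Hs lam a j k l i1 i2 i3 = Hs lam' a' j k l i1 i2 i3"
  using fun_cong[OF mu, of "(j, k, l, i1, i2, i3)"] jkl i by (simp add: pctf_mu_def Hs_def)

lemma Hs_perm:
  "Hs lam a m2 m1 m3 i2 i1 i3 = Hs lam a m1 m2 m3 i1 i2 i3"
  "Hs lam a m1 m3 m2 i1 i3 i2 = Hs lam a m1 m2 m3 i1 i2 i3"
  "Hs lam a m2 m3 m1 i2 i3 i1 = Hs lam a m1 m2 m3 i1 i2 i3"
  "Hs lam a m3 m1 m2 i3 i1 i2 = Hs lam a m1 m2 m3 i1 i2 i3"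
  "Hs lam a m3 m2 m1 i3 i2 i1 = Hs lam a m1 m2 m3 i1 i2 i3"
  by (simp_all add: Hs_def mult_ac)

lemma H_eq:
  assumes mu: "pctf_mu I R T lam a = pctf_mu I R T lam' a'"
    and T: "T = {{j, k, l} | j k l. j \<in> Mg 1 \<and> k \<in> Mg 2 \<and> l \<in> Mg 3}"
    and m: "m1 \<in> Mg 1" "m2 \<in> Mg 2" "m3 \<in> Mg 3" and i: "i1 < I" "i2 < I" "i3 < I"
  shows "Hs lam a m1 m2 m3 i1 i2 i3 = Hs lam' a' m1 m2 m3 i1 i2 i3"
proof -
  have d: "Mg 1 \<inter> Mg 2 = {}" "Mg 1 \<inter> Mg 3 = {}" "Mg 2 \<inter> Mg 3 = {}" using disj by auto
  then have ne: "m1 \<noteq> m2" "m1 \<noteq> m3" "m2 \<noteq> m3" using m by auto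
  have inT: "{m1, m2, m3} \<in> T" using m T by blast
  have P: "Hs lam a j k l x y z = Hs lam' a' j k l x y z"
    if "j < k" "k < l" "{j, k, l} = {m1, m2, m3}" "x < I" "y < I" "z < I" for j k l x y z
    using mu_point[OF mu that(1,2) _ that(4-6)] that(3) inT by simp
  consider "m1 < m2" "m2 < m3" | "m1 < m3" "m3 < m2" | "m2 < m1" "m1 < m3"
    | "m2 < m3" "m3 < m1" | "m3 < m1" "m1 < m2" | "m3 < m2" "m2 < m1"
    using ne by linarith
  then show ?thesis
  proof cases
    case 1 then show ?thesis using P[of m1 m2 m3 i1 i2 i3] i by simp
  next
    case 2 then show ?thesis using P[of m1 m3 m2 i1 i3 i2] i Hs_perm(2) by (simp add: insert_commute)
  next
    case 3 then show ?thesis using P[of m2 m1 m3 i2 i1 i3] i Hs_perm(1) by (simp add: insert_commute)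
  next
    case 4 then show ?thesis using P[of m2 m3 m1 i2 i3 i1] i Hs_perm(3) by (simp add: insert_commute)
  next
    case 5 then show ?thesis using P[of m3 m1 m2 i3 i1 i2] i Hs_perm(4) by (simp add: insert_commute)
  next
    case 6 then show ?thesis using P[of m3 m2 m1 i3 i2 i1] i Hs_perm(5) by (simp add: insert_commute)
  qed
qed

lemma marg_eq:
  assumes Th: "pctf_Theta I M R lam a" and Th': "pctf_Theta I M R lam' a'"
    and mu: "pctf_mu I R T lam a = pctf_mu I R T lam' a'"
    and T: "T = {{j, k, l} | j k l. j \<in> Mg 1 \<and> k \<in> Mg 2 \<and> l \<in> Mg 3}"
    and k: "k1 < Id 1" "k2 < Id 2" "k3 < Id 3"
  shows "(\<Sum>r<R. lam r * Xa a 1 k1 r * Xa a 2 k2 r * Xa a 3 k3 r) =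
         (\<Sum>r<R. lam' r * Xa a' 1 k1 r * Xa a' 2 k2 r * Xa a' 3 k3 r)"
  unfolding expand[OF Th k] expand[OF Th' k]
  using H_eq[OF mu T mm_in[of 1 k1] mm_in[of 2 k2] mm_in[of 3 k3]] k
  by (intro sum.cong refl) auto

end

context pctf_setup
begin

lemma coords_lam: "r + 1 < R \<Longrightarrow> pctf_coords I M R lam a (0, 0, r, 0) = lam r"
  by (simp add: pctf_coords_def pctf_idx_def)

lemma coords_a: "c = 1 \<Longrightarrow> m \<in> {1..M} \<Longrightarrow> r < R \<Longrightarrow> i + 1 < I \<Longrightarrow> pctf_coords I M R lam a (c, m, r, i) = a m r i"
  by (simp add: pctf_coords_def pctf_idx_def)

lemma sum_split_last: "(n::nat) \<ge> 1 \<Longrightarrow> (\<Sum>i<n. f i) = (\<Sum>i<n - 1. f i) + (f (n - 1) :: real)"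
  by (cases n) auto

lemma Scp_lam:
  assumes Th: "pctf_Theta I M R lam a" and r: "r < R"
  shows "Scp \<alpha> t0 (pctf_coords I M R lam a) (0, r, 0) = t0 * lam r / wt \<alpha> r"
proof -
  have rK: "(0, r, 0) \<in> K" using r by (simp add: K_iff)
  have "lamc (pctf_coords I M R lam a) r = lam r"
  proof (cases "r + 1 < R")
    case True then show ?thesis by (simp add: lamc_def coords_lam)
  next
    case False
    then have rr: "r = R - 1" using r by simp
    have "(\<Sum>r'<R - 1. pctf_coords I M R lam a (0, 0, r', 0)) = (\<Sum>r'<R - 1. lam r')"
      by (intro sum.cong refl) (auto simp: coords_lam)
    moreover have "(\<Sum>r'<R. lam r') = 1" using Th by (simp add: pctf_Theta_def)
    ultimately show ?thesis using False rr sum_split_last[OF R1, of lam] by (simp add: lamc_def)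
  qed
  then show ?thesis using rK by (simp add: Scp_def)
qed

lemma Scp_row:
  assumes g: "g \<in> {1,2,3}" and k: "k < Id g" and r: "r < R"
  shows "Scp \<alpha> t0 (pctf_coords I M R lam a) (g, k, r) = \<alpha> g r * Xa a g k r"
proof -
  have gK: "(g, k, r) \<in> K" using g k r by (simp add: K_iff)
  have g0: "g \<noteq> 0" using g by auto
  show ?thesis
  proof (cases "k = 0")
    case True then show ?thesis using gK g0 by (simp add: Scp_def Xa_def)
  next
    case False
    then have k1: "1 \<le> k" by simp
    have "e g ((k - 1) div (I - 1)) \<in> {1..M}"
      using divmod_k[OF k1 k g] e_in[OF g] Mg_sub[OF g] by blast
    then show ?thesis using gK g0 False r divmod_k[OF k1 k g]
      by (simp add: Scp_def Xa_def rhog coords_a)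
  qed
qed

lemma tensor_Scp:
  assumes Th: "pctf_Theta I M R lam a" and anz: "\<forall>g\<in>{1,2,3}. \<forall>r<R. \<alpha> g r \<noteq> 0"
    and k: "k1 < Id 1" "k2 < Id 2" "k3 < Id 3"
  shows "cp_tensor R (Scp \<alpha> t0 (pctf_coords I M R lam a)) k1 k2 k3 =
      t0 * (\<Sum>r<R. lam r * Xa a 1 k1 r * Xa a 2 k2 r * Xa a 3 k3 r)"
  unfolding cp_tensor_def sum_distrib_left
proof (intro sum.cong refl)
  fix r assume "r \<in> {..<R}"
  then have r: "r < R" by simp
  have w: "wt \<alpha> r \<noteq> 0" using anz r by (simp add: wt_def)
  have "Scp \<alpha> t0 (pctf_coords I M R lam a) (1, k1, r) = \<alpha> 1 r * Xa a 1 k1 r" by (rule Scp_row) (use k r in auto)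
  moreover have "Scp \<alpha> t0 (pctf_coords I M R lam a) (2, k2, r) = \<alpha> 2 r * Xa a 2 k2 r" by (rule Scp_row) (use k r in auto)
  moreover have "Scp \<alpha> t0 (pctf_coords I M R lam a) (3, k3, r) = \<alpha> 3 r * Xa a 3 k3 r" by (rule Scp_row) (use k r in auto)
  moreover have "Scp \<alpha> t0 (pctf_coords I M R lam a) (0, r, 0) = t0 * lam r / wt \<alpha> r" by (rule Scp_lam[OF Th r])
  ultimately show "Scp \<alpha> t0 (pctf_coords I M R lam a) (0, r, 0) * Scp \<alpha> t0 (pctf_coords I M R lam a) (1, k1, r) *
          Scp \<alpha> t0 (pctf_coords I M R lam a) (2, k2, r) * Scp \<alpha> t0 (pctf_coords I M R lam a) (3, k3, r) =
          t0 * (lam r * Xa a 1 k1 r * Xa a 2 k2 r * Xa a 3 k3 r)"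
    using w by (simp add: wt_def field_simps)
qed

lemma row_eq:
  assumes g: "g \<in> {1,2,3}" and r: "r < R" and sr: "r' < R"
    and anz: "\<forall>g\<in>{1,2,3}. \<forall>r<R. \<alpha> g r \<noteq> 0"
    and h: "\<forall>k<Id g. Scp \<alpha> t0 (pctf_coords I M R lam' a') (g, k, r) = s * Scp \<alpha> t0 (pctf_coords I M R lam a) (g, k, r')"
  shows "s = \<alpha> g r / \<alpha> g r'" "\<And>k. k < Id g \<Longrightarrow> Xa a' g k r = Xa a g k r'"
proof -
  have a1: "\<alpha> g r \<noteq> 0" "\<alpha> g r' \<noteq> 0" using anz g r sr by auto
  have k0: "0 < Id g" by (simp add: Id_def)
  have "Scp \<alpha> t0 (pctf_coords I M R lam' a') (g, 0, r) = s * Scp \<alpha> t0 (pctf_coords I M R lam a) (g, 0, r')"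
    using h k0 by blast
  then have "\<alpha> g r * Xa a' g 0 r = s * (\<alpha> g r' * Xa a g 0 r')"
    unfolding Scp_row[OF g k0 r] Scp_row[OF g k0 sr] .
  then have s: "\<alpha> g r = s * \<alpha> g r'" by (simp add: Xa_def)
  then show "s = \<alpha> g r / \<alpha> g r'" using a1 by (simp add: field_simps)
  fix k assume k: "k < Id g"
  have "Scp \<alpha> t0 (pctf_coords I M R lam' a') (g, k, r) = s * Scp \<alpha> t0 (pctf_coords I M R lam a) (g, k, r')"
    using h k by blast
  then have "\<alpha> g r * Xa a' g k r = s * (\<alpha> g r' * Xa a g k r')"
    unfolding Scp_row[OF g k r] Scp_row[OF g k sr] .
  then have "\<alpha> g r * Xa a' g k r = \<alpha> g r * Xa a g k r'" using s by (simp add: mult.assoc)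
  then show "Xa a' g k r = Xa a g k r'" using a1 by simp
qed

lemma Xa_at:
  assumes m: "m \<in> {1..M}" and i: "i + 1 < I"
  shows "Xa b (grp m) (1 + pos m * (I - 1) + i) r = b m r i"
    and "1 + pos m * (I - 1) + i < Id (grp m)"
proof -
  have i': "i < I - 1" using i by simp
  have "(pos m * (I - 1) + i) div (I - 1) = pos m" "(pos m * (I - 1) + i) mod (I - 1) = i"
    using i' by auto
  then show "Xa b (grp m) (1 + pos m * (I - 1) + i) r = b m r i"
    using pos_props[OF m] by (simp add: Xa_def)
  have p: "pos m < card (Mg (grp m))" using pos_props m by auto
  have "pos m * (I - 1) + i < (pos m + 1) * (I - 1)" using i' by simp
  also have "\<dots> \<le> card (Mg (grp m)) * (I - 1)" using p by (intro mult_right_mono) auto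
  finally show "1 + pos m * (I - 1) + i < Id (grp m)" by (simp add: Id_def mult.commute)
qed

lemma equiv_to_perm:
  assumes Th: "pctf_Theta I M R lam a" and Th': "pctf_Theta I M R lam' a'"
    and anz: "\<forall>g\<in>{1,2,3}. \<forall>r<R. \<alpha> g r \<noteq> 0" and t0: "t0 \<noteq> 0"
    and eqv: "cp_equivalent (Id 1) (Id 2) (Id 3) R (Scp \<alpha> t0 (pctf_coords I M R lam a)) (Scp \<alpha> t0 (pctf_coords I M R lam' a'))"
  shows "pctf_block_perm I M R lam a lam' a'"
proof -
  let ?p = "Scp \<alpha> t0 (pctf_coords I M R lam a)" and ?p' = "Scp \<alpha> t0 (pctf_coords I M R lam' a')"
  obtain \<sigma> \<delta> sA sB sC where bij: "bij_betw \<sigma> {..<R} {..<R}" and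
    E: "\<forall>r<R. \<delta> r * sA r * sB r * sC r = (1::real) \<and>
         ?p' (0, r, 0) = \<delta> r * ?p (0, \<sigma> r, 0) \<and>
         (\<forall>i<Id 1. ?p' (1, i, r) = sA r * ?p (1, i, \<sigma> r)) \<and>
         (\<forall>i<Id 2. ?p' (2, i, r) = sB r * ?p (2, i, \<sigma> r)) \<and>
         (\<forall>i<Id 3. ?p' (3, i, r) = sC r * ?p (3, i, \<sigma> r))"
    using eqv unfolding cp_equivalent_def by blast
  have sr: "\<sigma> r < R" if "r < R" for r using bij that by (auto simp: bij_betw_def)
  have E0: "\<delta> r * sA r * sB r * sC r = 1" if "r < R" for r using E that by blast
  have El: "?p' (0, r, 0) = \<delta> r * ?p (0, \<sigma> r, 0)" if "r < R" for r using E that by blast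
  have EA: "\<forall>i<Id 1. ?p' (1, i, r) = sA r * ?p (1, i, \<sigma> r)" if "r < R" for r using E that by blast
  have EB: "\<forall>i<Id 2. ?p' (2, i, r) = sB r * ?p (2, i, \<sigma> r)" if "r < R" for r using E that by blast
  have EC: "\<forall>i<Id 3. ?p' (3, i, r) = sC r * ?p (3, i, \<sigma> r)" if "r < R" for r using E that by blast
  have rows: "Xa a' g k r = Xa a g k (\<sigma> r)" if "g \<in> {1,2,3}" "k < Id g" "r < R" for g k r
  proof -
    from that(1) consider "g = 1" | "g = 2" | "g = 3" by auto
    then show ?thesis
    proof cases
      case 1 then show ?thesis using row_eq(2)[OF _ that(3) sr[OF that(3)] anz EA[OF that(3)]] that by simp
    next
      case 2 then show ?thesis using row_eq(2)[OF _ that(3) sr[OF that(3)] anz EB[OF that(3)]] that by simp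
    next
      case 3 then show ?thesis using row_eq(2)[OF _ that(3) sr[OF that(3)] anz EC[OF that(3)]] that by simp
    qed
  qed
  have lam_eq: "lam' r = lam (\<sigma> r)" if r: "r < R" for r
  proof -
    have s1: "sA r = \<alpha> 1 r / \<alpha> 1 (\<sigma> r)"
      by (rule row_eq(1)[OF _ r sr[OF r] anz EA[OF r]]) simp
    have s2: "sB r = \<alpha> 2 r / \<alpha> 2 (\<sigma> r)"
      by (rule row_eq(1)[OF _ r sr[OF r] anz EB[OF r]]) simp
    have s3: "sC r = \<alpha> 3 r / \<alpha> 3 (\<sigma> r)"
      by (rule row_eq(1)[OF _ r sr[OF r] anz EC[OF r]]) simp
    have nz: "\<alpha> 1 r \<noteq> 0" "\<alpha> 2 r \<noteq> 0" "\<alpha> 3 r \<noteq> 0" "\<alpha> 1 (\<sigma> r) \<noteq> 0" "\<alpha> 2 (\<sigma> r) \<noteq> 0" "\<alpha> 3 (\<sigma> r) \<noteq> 0"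
      using anz r sr[OF r] by auto
    have d: "\<delta> r * sA r * sB r * sC r = 1" using E0 r by blast
    then have dd: "\<delta> r = wt \<alpha> (\<sigma> r) / wt \<alpha> r"
      unfolding s1 s2 s3 using nz by (simp add: wt_def field_simps)
    have "t0 * lam' r / wt \<alpha> r = \<delta> r * (t0 * lam (\<sigma> r) / wt \<alpha> (\<sigma> r))"
      using El[OF r] unfolding Scp_lam[OF Th' r] Scp_lam[OF Th sr[OF r]] .
    then show ?thesis using t0 nz unfolding dd by (simp add: wt_def field_simps)
  qed
  have a_eq: "a' m r i = a m (\<sigma> r) i" if m: "m \<in> {1..M}" and r: "r < R" and i: "i < I" for m r i
  proof -
    have g: "grp m \<in> {1,2,3}" using grp_in m by auto
    have lt: "a' m r i = a m (\<sigma> r) i" if i: "i + 1 < I" for i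
      using rows[OF g Xa_at(2)[OF m i] r] Xa_at(1)[OF m i] by simp
    show ?thesis
    proof (cases "i + 1 < I")
      case True then show ?thesis using lt by simp
    next
      case False
      then have ii: "i = I - 1" using i by simp
      have I1: "I \<ge> 1" using I2 by simp
      have "(\<Sum>i<I. a' m r i) = 1" using Th' m r by (simp add: pctf_Theta_def)
      moreover have "(\<Sum>i<I. a m (\<sigma> r) i) = 1" using Th m sr[OF r] by (simp add: pctf_Theta_def)
      moreover have "(\<Sum>i<I - 1. a' m r i) = (\<Sum>i<I - 1. a m (\<sigma> r) i)"
        by (intro sum.cong refl) (use lt in auto)
      ultimately show ?thesis
        using sum_split_last[OF I1, of "a' m r"] sum_split_last[OF I1, of "a m (\<sigma> r)"] ii by simp
    qed
  qed
  show ?thesis unfolding pctf_block_perm_def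
    using bij lam_eq a_eq by (intro exI[of _ \<sigma>]) auto
qed

lemma ident:
  assumes T: "T = {{j, k, l} | j k l. j \<in> Mg 1 \<and> k \<in> Mg 2 \<and> l \<in> Mg 3}"
    and cp: "cp_identifiable (Id 1) (Id 2) (Id 3) R"
  shows "pctf_identifiable I M R T"
proof -
  from cp obtain N where N: "N \<in> null_sets (cp_measure (Id 1) (Id 2) (Id 3) R)"
    and HN: "\<forall>p\<in>space (cp_measure (Id 1) (Id 2) (Id 3) R) - N. \<forall>p'\<in>space (cp_measure (Id 1) (Id 2) (Id 3) R).
            (\<forall>i1<Id 1. \<forall>i2<Id 2. \<forall>i3<Id 3. cp_tensor R p' i1 i2 i3 = cp_tensor R p i1 i2 i3)
            \<longrightarrow> cp_equivalent (Id 1) (Id 2) (Id 3) R p p'"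
    unfolding cp_identifiable_def by blast
  obtain \<alpha> t0 Z where anz: "\<forall>g\<in>{1,2,3}. \<forall>r<R. \<alpha> g r \<noteq> 0" and t0: "t0 \<noteq> 0"
    and Z: "Z \<in> null_sets (LB J)" and ZN: "\<forall>c\<in>space (LB J) - Z. Scp \<alpha> t0 c \<notin> N"
    using generic_choice[OF N] by blast
  have spK: "space (cp_measure (Id 1) (Id 2) (Id 3) R) = space (LB K)" by (simp only: cp_measure_def K_def)
  have Scp_sp: "Scp \<alpha> t0 c \<in> space (cp_measure (Id 1) (Id 2) (Id 3) R)" for c
    unfolding spK by (simp add: Scp_def space_PiM)
  show ?thesis unfolding pctf_identifiable_def
  proof (rule bexI[of _ Z], intro allI impI)
    show "Z \<in> null_sets (PiM (pctf_idx I M R) (\<lambda>_. lborel))" using Z by (simp add: J_def)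
  next
    fix lam a lam' a'
    assume A: "pctf_Theta I M R lam a \<and> pctf_coords I M R lam a \<notin> Z"
      and B: "pctf_Theta I M R lam' a' \<and> pctf_mu I R T lam' a' = pctf_mu I R T lam a"
    have Th: "pctf_Theta I M R lam a" and cZ: "pctf_coords I M R lam a \<notin> Z" using A by auto
    have Th': "pctf_Theta I M R lam' a'" and mu: "pctf_mu I R T lam a = pctf_mu I R T lam' a'" using B by auto
    have csp: "pctf_coords I M R lam a \<in> space (LB J)"
      by (simp add: pctf_coords_def space_PiM J_def)
    let ?p = "Scp \<alpha> t0 (pctf_coords I M R lam a)" and ?p' = "Scp \<alpha> t0 (pctf_coords I M R lam' a')"
    have pN: "?p \<notin> N" using ZN csp cZ by blast
    have teq: "\<forall>i1<Id 1. \<forall>i2<Id 2. \<forall>i3<Id 3. cp_tensor R ?p' i1 i2 i3 = cp_tensor R ?p i1 i2 i3"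
    proof (intro allI impI)
      fix i1 i2 i3 assume k: "i1 < Id 1" "i2 < Id 2" "i3 < Id 3"
      show "cp_tensor R ?p' i1 i2 i3 = cp_tensor R ?p i1 i2 i3"
        unfolding tensor_Scp[OF Th anz k] tensor_Scp[OF Th' anz k]
        using marg_eq[OF Th Th' mu T k] by simp
    qed
    have "cp_equivalent (Id 1) (Id 2) (Id 3) R ?p ?p'"
      using HN Scp_sp pN teq by blast
    then show "pctf_block_perm I M R lam a lam' a'"
      by (rule equiv_to_perm[OF Th Th' anz t0])
  qed
qed

end


theorem mainTheorem1:
  fixes I M R :: nat and M1 M2 M3 :: "nat set" and T :: "nat set set"
  assumes "I \<ge> 2" and "M > 3" and "R \<ge> 1"
    and "M1 \<noteq> {}" and "M2 \<noteq> {}" and "M3 \<noteq> {}"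
    and "M1 \<inter> M2 = {}" and "M1 \<inter> M3 = {}" and "M2 \<inter> M3 = {}"
    and "M1 \<union> M2 \<union> M3 = {1..M}"
    and "T = {{j, k, l} | j k l. j \<in> M1 \<and> k \<in> M2 \<and> l \<in> M3}"
    and "cp_identifiable ((I - 1) * card M1 + 1) ((I - 1) * card M2 + 1) ((I - 1) * card M3 + 1) R"
  shows "pctf_identifiable I M R T"
proof -
  have f1: "finite M1" and f2: "finite M2" and f3: "finite M3"
    using assms(10) by (metis finite_Un finite_atLeastAtMost)+
  obtain e1 where e1: "bij_betw e1 {..<card M1} M1" using ex_bij_betw_nat_finite[OF f1] by (auto simp: atLeast0LessThan)
  obtain e2 where e2: "bij_betw e2 {..<card M2} M2" using ex_bij_betw_nat_finite[OF f2] by (auto simp: atLeast0LessThan)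
  obtain e3 where e3: "bij_betw e3 {..<card M3} M3" using ex_bij_betw_nat_finite[OF f3] by (auto simp: atLeast0LessThan)
  define Mg where "Mg g = (if g = 1 then M1 else if g = 2 then M2 else M3)" for g :: nat
  define e where "e g = (if g = 1 then e1 else if g = 2 then e2 else e3)" for g :: nat
  have Mg: "Mg 1 = M1" "Mg 2 = M2" "Mg 3 = M3" by (simp_all add: Mg_def)
  interpret pctf_setup I M R Mg e
  proof
    show "I \<ge> 2" "R \<ge> 1" using assms by auto
    show "\<And>g. g \<in> {1,2,3} \<Longrightarrow> Mg g \<noteq> {}" using assms by (auto simp: Mg_def)
    show "\<And>g h. g \<in> {1,2,3} \<Longrightarrow> h \<in> {1,2,3} \<Longrightarrow> g \<noteq> h \<Longrightarrow> Mg g \<inter> Mg h = {}"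
      using assms by (auto simp: Mg_def)
    show "Mg 1 \<union> Mg 2 \<union> Mg 3 = {1..M}" unfolding Mg by (rule assms(10))
    show "\<And>g. g \<in> {1,2,3} \<Longrightarrow> bij_betw (e g) {..<card (Mg g)} (Mg g)"
      using e1 e2 e3 by (auto simp: Mg_def e_def)
  qed
  show ?thesis
  proof (rule ident)
    show "T = {{j, k, l} | j k l. j \<in> Mg 1 \<and> k \<in> Mg 2 \<and> l \<in> Mg 3}" unfolding Mg by (rule assms(11))
    show "cp_identifiable (Id 1) (Id 2) (Id 3) R" unfolding Id_def Mg by (rule assms(12))
  qed
qed

end
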